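(* For every $n\ge1$ and $k\ge1$, $$h_n\!\left[\frac{1}{(1-q_1)\cdots(1-q_k)}\right]=\frac{\sum_{\sigma^1\cdots\sigma^k=\epsilon}q_1^{\mathrm{comaj}(\sigma^1)}\cdots q_k^{\mathrm{comaj}(\sigma^k)}}{(q_1;q_1)_n\cdots(q_k;q_k)_n},$$ the sum running over all $k$-tuples $(\sigma^1,\dots,\sigma^k)\in S_n^{\times k}$ whose product $\sigma^1\cdots\sigma^k$ is the identity $\epsilon$.
   Context: $h_n$ is the complete homogeneous symmetric function, evaluated at all monomials $q_1^{a_1}\cdots q_k^{a_k}$, $a\in\mathbb{N}^k$. $(q;t)_r=(1-q)(1-qt)\cdots(1-qt^{r-1})$. For $\sigma\in S_n$, $\mathrm{comaj}(\sigma)=\sum_{i:\sigma_i>\sigma_{i+1}}(n-i)$. *)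

theory Defs
  imports "HOL-Analysis.Analysis" "HOL-Library.Multiset" "HOL-Combinatorics.Permutations"
begin

definition exps :: "nat \<Rightarrow> nat list set" where
  "exps k = {a. length a = k}"

text \<open>The monomial q_1^{a_1} ... q_k^{a_k} (variables indexed 0..k-1).\<close>
definition monomial :: "(nat \<Rightarrow> real) \<Rightarrow> nat \<Rightarrow> nat list \<Rightarrow> real" where
  "monomial q k a = (\<Prod>j<k. q j ^ (a ! j))"

text \<open>h_n evaluated at the alphabet of all monomials: sum over all multisets of size n
  of exponent vectors of the product of the corresponding monomials.\<close>
definition h_index :: "nat \<Rightarrow> nat \<Rightarrow> nat list multiset set" where
  "h_index n k = {M. size M = n \<and> set_mset M \<subseteq> exps k}"

definition h_term :: "(nat \<Rightarrow> real) \<Rightarrow> nat \<Rightarrow> nat list multiset \<Rightarrow> real" where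
  "h_term q k M = prod_mset (image_mset (monomial q k) M)"

definition qpoch :: "real \<Rightarrow> real \<Rightarrow> nat \<Rightarrow> real" where
  "qpoch a t r = (\<Prod>i<r. (1 - a * t ^ i))"

definition comaj :: "nat \<Rightarrow> (nat \<Rightarrow> nat) \<Rightarrow> nat" where
  "comaj n \<sigma> = (\<Sum>i\<in>{1..<n}. if \<sigma> i > \<sigma> (Suc i) then n - i else 0)"

definition tuple_prod :: "nat \<Rightarrow> (nat \<Rightarrow> nat \<Rightarrow> nat) \<Rightarrow> nat \<Rightarrow> nat" where
  "tuple_prod k s = foldr (\<lambda>j acc. s j \<circ> acc) [0..<k] id"

definition id_tuples :: "nat \<Rightarrow> nat \<Rightarrow> (nat \<Rightarrow> nat \<Rightarrow> nat) set" where
  "id_tuples n k = {s \<in> {0..<k} \<rightarrow>\<^sub>E {\<sigma>. \<sigma> permutes {1..n}}. tuple_prod k s = id}"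

end

theory Submission
  imports Defs "HOL-Library.List_Lexorder"
begin


lemma has_sum_times_real:
  fixes f :: "'a \<Rightarrow> real" and g :: "'b \<Rightarrow> real"
  assumes f: "(f has_sum a) A" and g: "(g has_sum b) B"
  shows "((\<lambda>(x,y). f x * g y) has_sum (a*b)) (A \<times> B)"
proof -
  have fs: "(\<lambda>x. norm (f x)) summable_on A" using f summable_on_iff_abs_summable_on_real
    using has_sum_imp_summable by blast
  have gs: "(\<lambda>x. norm (g x)) summable_on B" using g summable_on_iff_abs_summable_on_real
    using has_sum_imp_summable by blast
  have "(\<lambda>z. norm ((\<lambda>(x,y). f x * g y) z)) summable_on (A \<times> B)"
  proof (rule nonneg_bdd_above_summable_on)
    show "bdd_above (sum (\<lambda>z. norm ((\<lambda>(x,y). f x * g y) z)) ` {F. F \<subseteq> A \<times> B \<and> finite F})"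
    proof (rule bdd_aboveI2)
      fix F assume F: "F \<in> {F. F \<subseteq> A \<times> B \<and> finite F}"
      hence fin: "finite F" and sub: "F \<subseteq> A \<times> B" by auto
      have "(\<Sum>z\<in>F. norm ((\<lambda>(x,y). f x * g y) z)) \<le> (\<Sum>z\<in>fst ` F \<times> snd ` F. norm ((\<lambda>(x,y). f x * g y) z))"
        by (rule sum_mono2) (auto simp: fin, force, metis image_iff snd_conv)
      also have "\<dots> = (\<Sum>x\<in>fst ` F. norm (f x)) * (\<Sum>y\<in>snd ` F. norm (g y))"
        by (simp add: sum_product sum.cartesian_product norm_mult abs_mult case_prod_unfold)
      also have "\<dots> \<le> (\<Sum>\<^sub>\<infinity>x\<in>A. norm (f x)) * (\<Sum>\<^sub>\<infinity>y\<in>B. norm (g y))"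
      proof (rule mult_mono)
        show "(\<Sum>x\<in>fst ` F. norm (f x)) \<le> (\<Sum>\<^sub>\<infinity>x\<in>A. norm (f x))"
          using fs sub fin by (intro finite_sum_le_infsum) auto
        show "(\<Sum>y\<in>snd ` F. norm (g y)) \<le> (\<Sum>\<^sub>\<infinity>y\<in>B. norm (g y))"
          using gs sub fin by (intro finite_sum_le_infsum) auto
      qed (auto intro: infsum_nonneg sum_nonneg)
      finally show "(\<Sum>z\<in>F. norm ((\<lambda>(x,y). f x * g y) z)) \<le> (\<Sum>\<^sub>\<infinity>x\<in>A. norm (f x)) * (\<Sum>\<^sub>\<infinity>y\<in>B. norm (g y))" .
    qed
  qed auto
  hence summ: "(\<lambda>(x,y). f x * g y) summable_on (A \<times> B)"
    using abs_summable_summable by blast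
  show ?thesis
  proof (rule has_sum_SigmaI[where g = "\<lambda>x. f x * b"])
    show "((\<lambda>y. (\<lambda>(x,y). f x * g y) (x, y)) has_sum f x * b) B" if "x \<in> A" for x
      using has_sum_cmult_right[OF g] by simp
    show "((\<lambda>x. f x * b) has_sum a * b) A"
      using has_sum_cmult_left[OF f] by simp
  qed (use summ in simp)
qed

lemma has_sum_Sigma_finite:
  fixes f :: "'a \<times> 'b \<Rightarrow> real"
  assumes "finite A" "\<And>a. a \<in> A \<Longrightarrow> ((\<lambda>y. f (a,y)) has_sum s a) (B a)"
  shows "(f has_sum (\<Sum>a\<in>A. s a)) (Sigma A B)"
  using assms
proof (induction A rule: finite_induct)
  case empty then show ?case by simp
next
  case (insert a A)
  have e: "Sigma (insert a A) B = Pair a ` B a \<union> Sigma A B" by auto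
  have 1: "(f has_sum s a) (Pair a ` B a)"
    using insert.prems[of a] by (subst has_sum_reindex) (auto simp: o_def inj_on_def)
  have 2: "(f has_sum (\<Sum>a\<in>A. s a)) (Sigma A B)" using insert by auto
  have "(f has_sum (s a + (\<Sum>a\<in>A. s a))) (Pair a ` B a \<union> Sigma A B)"
    by (rule has_sum_Un_disjoint[OF 1 2]) (use insert.hyps in auto)
  then show ?case using insert.hyps by (simp add: e)
qed



definition lexl :: "(nat \<Rightarrow> 'a::linorder) \<Rightarrow> nat \<Rightarrow> nat \<Rightarrow> bool" where
  "lexl x p p' \<longleftrightarrow> x p < x p' \<or> (x p = x p' \<and> p < p')"

definition sorts :: "nat \<Rightarrow> (nat \<Rightarrow> nat) \<Rightarrow> (nat \<Rightarrow> 'a::linorder) \<Rightarrow> bool" where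
  "sorts n \<sigma> x \<longleftrightarrow> (\<forall>i\<in>{1..n}. \<forall>j\<in>{1..n}. i < j \<longrightarrow> lexl x (\<sigma> i) (\<sigma> j))"

definition rk :: "nat \<Rightarrow> (nat \<Rightarrow> 'a::linorder) \<Rightarrow> nat \<Rightarrow> nat" where
  "rk n x p = Suc (card {p'\<in>{1..n}. lexl x p' p})"

lemma lexl_irrefl: "\<not> lexl x p p" by (auto simp: lexl_def)
lemma lexl_asym: "lexl x p p' \<Longrightarrow> \<not> lexl x p' p" by (auto simp: lexl_def)
lemma lexl_trans: "lexl x p p' \<Longrightarrow> lexl x p' p'' \<Longrightarrow> lexl x p p''"
  by (auto simp: lexl_def)
lemma lexl_total: "p \<noteq> p' \<Longrightarrow> lexl x p p' \<or> lexl x p' p"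
  by (auto simp: lexl_def)

lemma rk_mono:
  assumes "p \<in> {1..n}" "p' \<in> {1..n}" "lexl x p p'"
  shows "rk n x p < rk n x p'"
proof -
  have "{p''\<in>{1..n}. lexl x p'' p} \<subset> {p''\<in>{1..n}. lexl x p'' p'}"
  proof
    show "{p''\<in>{1..n}. lexl x p'' p} \<subseteq> {p''\<in>{1..n}. lexl x p'' p'}"
      using assms(3) lexl_trans[of x _ p p'] by auto
    have "p \<in> {p''\<in>{1..n}. lexl x p'' p'}" using assms by simp
    moreover have "p \<notin> {p''\<in>{1..n}. lexl x p'' p}" by (simp add: lexl_irrefl)
    ultimately show "{p''\<in>{1..n}. lexl x p'' p} \<noteq> {p''\<in>{1..n}. lexl x p'' p'}" by blast
  qed
  then show ?thesis unfolding rk_def by (simp add: psubset_card_mono)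
qed

lemma rk_range:
  assumes "p \<in> {1..n}" shows "rk n x p \<in> {1..n}"
proof -
  have "{p'\<in>{1..n}. lexl x p' p} \<subseteq> {1..n} - {p}" by (auto simp: lexl_irrefl)
  hence "card {p'\<in>{1..n}. lexl x p' p} \<le> card ({1..n} - {p})" by (intro card_mono) auto
  also have "\<dots> = n - 1" using assms by simp
  finally show ?thesis using assms unfolding rk_def by auto
qed

lemma rk_inj: "inj_on (rk n x) {1..n}"
proof (rule inj_onI)
  fix p p' assume "p \<in> {1..n}" "p' \<in> {1..n}" "rk n x p = rk n x p'"
  then show "p = p'"
  proof (cases "p = p'")
    case False
    then have "lexl x p p' \<or> lexl x p' p" by (rule lexl_total)
    then show ?thesis
    proof
      assume "lexl x p p'"
      then have "rk n x p < rk n x p'" using rk_mono \<open>p \<in> {1..n}\<close> \<open>p' \<in> {1..n}\<close> by blast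
      then show ?thesis using \<open>rk n x p = rk n x p'\<close> by simp
    next
      assume "lexl x p' p"
      then have "rk n x p' < rk n x p" using rk_mono \<open>p \<in> {1..n}\<close> \<open>p' \<in> {1..n}\<close> by blast
      then show ?thesis using \<open>rk n x p = rk n x p'\<close> by simp
    qed
  qed simp
qed

lemma sortsD: "sorts n \<sigma> x \<Longrightarrow> i \<in> {1..n} \<Longrightarrow> j \<in> {1..n} \<Longrightarrow> i < j \<Longrightarrow> lexl x (\<sigma> i) (\<sigma> j)"
  unfolding sorts_def by blast

lemma sorts_rk:
  assumes s: "\<sigma> permutes {1..n}" and so: "sorts n \<sigma> x" and i: "i \<in> {1..n}"
  shows "rk n x (\<sigma> i) = i"
proof -
  have "{p'\<in>{1..n}. lexl x p' (\<sigma> i)} = \<sigma> ` {1..<i}"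
  proof (intro equalityI subsetI)
    fix p' assume p': "p' \<in> {p'\<in>{1..n}. lexl x p' (\<sigma> i)}"
    have "p' \<in> \<sigma> ` {1..n}" using permutes_image[OF s] p' by simp
    then obtain j where j: "j \<in> {1..n}" "p' = \<sigma> j" by blast
    have "j < i"
    proof (rule ccontr)
      assume "\<not> j < i"
      then consider "j = i" | "i < j" by linarith
      then show False
      proof cases
        case 1 then show False using p' j by (auto simp: lexl_irrefl)
      next
        case 2
        have "lexl x (\<sigma> i) (\<sigma> j)" by (rule sortsD[OF so i j(1) 2])
        moreover have "lexl x (\<sigma> j) (\<sigma> i)" using p' j(2) by simp
        ultimately show False using lexl_asym[of x "\<sigma> i" "\<sigma> j"] by simp
      qed
    qed
    then have "j \<in> {1..<i}" using j(1) by simp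
    then show "p' \<in> \<sigma> ` {1..<i}" unfolding j(2) by (rule imageI)
  next
    fix p' assume "p' \<in> \<sigma> ` {1..<i}"
    then obtain j where j: "j \<in> {1..<i}" "p' = \<sigma> j" by auto
    have jn: "j \<in> {1..n}" using j i by auto
    have "lexl x p' (\<sigma> i)" unfolding j(2) by (rule sortsD[OF so jn i]) (use j in auto)
    moreover have "p' \<in> {1..n}" unfolding j(2) using jn permutes_in_image[OF s] by simp
    ultimately show "p' \<in> {p'\<in>{1..n}. lexl x p' (\<sigma> i)}" by simp
  qed
  then have "rk n x (\<sigma> i) = Suc (card (\<sigma> ` {1..<i}))" unfolding rk_def by simp
  moreover have "card (\<sigma> ` {1..<i}) = i - 1"
  proof -
    have "inj_on \<sigma> {1..<i}" using permutes_inj[OF s] by (simp add: inj_def inj_on_def)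
    then show ?thesis by (simp add: card_image)
  qed
  ultimately show ?thesis using i by simp
qed

lemma sorts_unique:
  assumes "\<sigma> permutes {1..n}" "sorts n \<sigma> x" "\<sigma>' permutes {1..n}" "sorts n \<sigma>' x"
  shows "\<sigma> = \<sigma>'"
proof
  fix i
  show "\<sigma> i = \<sigma>' i"
  proof (cases "i \<in> {1..n}")
    case True
    have "rk n x (\<sigma> i) = rk n x (\<sigma>' i)"
      using sorts_rk[OF assms(1,2) True] sorts_rk[OF assms(3,4) True] by simp
    moreover have "\<sigma> i \<in> {1..n}" "\<sigma>' i \<in> {1..n}"
      using True permutes_in_image[OF assms(1)] permutes_in_image[OF assms(3)] by auto
    ultimately show ?thesis by (rule inj_onD[OF rk_inj])
  next
    case False
    then have "i \<notin> {1..n}" by simp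
    then show ?thesis using permutes_not_in[OF assms(1)] permutes_not_in[OF assms(3)] by metis
  qed
qed

lemma sorts_exists:
  "\<exists>\<sigma>. \<sigma> permutes {1..n} \<and> sorts n \<sigma> (x::nat \<Rightarrow> 'a::linorder)"
proof -
  define r where "r p = (if p \<in> {1..n} then rk n x p else p)" for p
  have bij: "bij_betw r {1..n} {1..n}"
  proof -
    have "inj_on r {1..n} = inj_on (rk n x) {1..n}" by (rule inj_on_cong) (simp add: r_def)
    then have inj: "inj_on r {1..n}" using rk_inj[of n x] by simp
    have sub: "r ` {1..n} \<subseteq> {1..n}"
    proof
      fix y assume "y \<in> r ` {1..n}"
      then obtain p where p: "p \<in> {1..n}" "y = r p" by blast
      then have "y = rk n x p" by (simp add: r_def)
      then show "y \<in> {1..n}" using rk_range[OF p(1)] by simp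
    qed
    have "card (r ` {1..n}) = card {1..n}" by (rule card_image[OF inj])
    then have "r ` {1..n} = {1..n}" by (intro card_subset_eq[OF _ sub]) simp_all
    then show ?thesis using inj by (simp add: bij_betw_def)
  qed
  have rp: "r permutes {1..n}"
    by (rule bij_imp_permutes[OF bij]) (auto simp: r_def)
  define \<sigma> where "\<sigma> = inv r"
  have sp: "\<sigma> permutes {1..n}" unfolding \<sigma>_def using rp by (rule permutes_inv)
  have rs: "r (\<sigma> i) = i" for i unfolding \<sigma>_def by (rule permutes_inverses(1)[OF rp])
  have "sorts n \<sigma> x"
    unfolding sorts_def
  proof (intro ballI impI)
    fix i j assume ij: "i \<in> {1..n}" "j \<in> {1..n}" "i < j"
    have si: "\<sigma> i \<in> {1..n}" "\<sigma> j \<in> {1..n}" using ij permutes_in_image[OF sp] by auto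
    have ne: "\<sigma> i \<noteq> \<sigma> j"
    proof
      assume "\<sigma> i = \<sigma> j" then have "r (\<sigma> i) = r (\<sigma> j)" by simp
      then show False using rs[of i] rs[of j] ij by simp
    qed
    show "lexl x (\<sigma> i) (\<sigma> j)"
    proof (rule ccontr)
      assume "\<not> lexl x (\<sigma> i) (\<sigma> j)"
      then have "lexl x (\<sigma> j) (\<sigma> i)" using lexl_total[OF ne, of x] by simp
      then have "rk n x (\<sigma> j) < rk n x (\<sigma> i)" by (rule rk_mono[OF si(2) si(1)])
      moreover have "r (\<sigma> j) = rk n x (\<sigma> j)" "r (\<sigma> i) = rk n x (\<sigma> i)" using si by (simp_all add: r_def)
      ultimately have "r (\<sigma> j) < r (\<sigma> i)" by simp
      then show False using rs ij by simp
    qed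
  qed
  then show ?thesis using sp by blast
qed

lemma sorts_consec:
  assumes "sorts n \<sigma> x" "i \<in> {1..<n}"
  shows "lexl x (\<sigma> i) (\<sigma> (Suc i))"
  using assms unfolding sorts_def by auto

lemma sorts_from_consec:
  assumes "\<And>i. i \<in> {1..<n} \<Longrightarrow> lexl x (\<sigma> i) (\<sigma> (Suc i))"
  shows "sorts n \<sigma> x"
  unfolding sorts_def
proof (intro ballI impI)
  fix i j assume ij: "i \<in> {1..n}" "j \<in> {1..n}" "i < j"
  have "\<forall>j. i < j \<longrightarrow> j \<le> n \<longrightarrow> lexl x (\<sigma> i) (\<sigma> j)"
  proof (intro allI)
    fix j show "i < j \<longrightarrow> j \<le> n \<longrightarrow> lexl x (\<sigma> i) (\<sigma> j)"
    proof (induction j)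
      case 0 then show ?case by simp
    next
      case (Suc j)
      show ?case
      proof (intro impI)
        assume a: "i < Suc j" "Suc j \<le> n"
        have c: "lexl x (\<sigma> j) (\<sigma> (Suc j))" using assms[of j] a ij by auto
        show "lexl x (\<sigma> i) (\<sigma> (Suc j))"
        proof (cases "i = j")
          case True then show ?thesis using c by simp
        next
          case False
          then have "lexl x (\<sigma> i) (\<sigma> j)" using Suc.IH a by simp
          then show ?thesis using c lexl_trans by blast
        qed
      qed
    qed
  qed
  then show "lexl x (\<sigma> i) (\<sigma> j)" using ij by auto
qed

lemma sorts_iff_consec:
  "sorts n \<sigma> x \<longleftrightarrow> (\<forall>i\<in>{1..<n}. lexl x (\<sigma> i) (\<sigma> (Suc i)))"
  using sorts_consec sorts_from_consec by metis

lemma sorts_cong: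
  assumes "\<And>i j. i \<in> {1..n} \<Longrightarrow> j \<in> {1..n} \<Longrightarrow> \<sigma> permutes {1..n} \<Longrightarrow>
      lexl x (\<sigma> i) (\<sigma> j) \<longleftrightarrow> lexl y (\<sigma> i) (\<sigma> j)" "\<sigma> permutes {1..n}"
  shows "sorts n \<sigma> x \<longleftrightarrow> sorts n \<sigma> y"
  using assms unfolding sorts_def by auto



definition Wset :: "nat \<Rightarrow> (nat \<Rightarrow> nat) \<Rightarrow> (nat \<Rightarrow> nat) set" where
  "Wset n d = {u \<in> {..<n} \<rightarrow>\<^sub>E (UNIV::nat set). \<forall>i. Suc i < n \<longrightarrow> u i + d i \<le> u (Suc i)}"

lemma Wset_chain:
  assumes "u \<in> Wset N d" "i \<le> j" "j < N"
  shows "u i \<le> u j"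
  using assms(2,3)
proof (induction j)
  case 0 then show ?case by simp
next
  case (Suc j)
  show ?case
  proof (cases "i = Suc j")
    case True then show ?thesis by simp
  next
    case False
    then have "u i \<le> u j" using Suc by simp
    moreover have "u j + d j \<le> u (Suc j)" using assms(1) Suc.prems(2) unfolding Wset_def by blast
    ultimately show ?thesis by simp
  qed
qed

lemma geom_has_sum:
  fixes x :: real assumes "\<bar>x\<bar> < 1"
  shows "((\<lambda>a. x ^ a) has_sum (1 / (1 - x))) UNIV"
proof (rule norm_summable_imp_has_sum)
  show "summable (\<lambda>n. norm (x ^ n))"
  proof -
    have "summable (\<lambda>n. \<bar>x\<bar> ^ n)" by (rule summable_geometric) (use assms in simp)
    then show ?thesis by (simp add: power_abs)
  qed
  show "(\<lambda>n. x ^ n) sums (1 / (1 - x))"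
    using geometric_sums[of x] assms by simp
qed

lemma abs_pow_lt1: fixes q :: real assumes "\<bar>q\<bar> < 1" shows "\<bar>q ^ Suc m\<bar> < 1"
proof -
  have "\<bar>q\<bar> ^ m \<le> 1" by (rule power_le_one) (use assms in auto)
  then have "\<bar>q\<bar> * \<bar>q\<bar> ^ m \<le> \<bar>q\<bar>" by (simp add: mult_left_le)
  then show ?thesis using assms by (simp add: abs_mult power_abs)
qed

lemma W_has_sum:
  fixes q :: real
  assumes q: "\<bar>q\<bar> < 1"
  shows "((\<lambda>u. q ^ (\<Sum>i<n. u i)) has_sum
           (q ^ (\<Sum>i<n. d i * (n - Suc i)) / (\<Prod>i<n. (1 - q ^ Suc i)))) (Wset n d)"
proof (induction n arbitrary: d)
  case 0
  have "Wset 0 d = {\<lambda>_. undefined}" unfolding Wset_def by auto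
  then show ?case by (simp add: has_sum_finiteI)
next
  case (Suc n)
  define d' where "d' i = d (Suc i)" for i
  define P where "P = (\<Prod>i<n. (1 - q ^ Suc i))"
  define E where "E = (\<Sum>i<n. d' i * (n - Suc i))"
  have IH: "((\<lambda>u. q ^ (\<Sum>i<n. u i)) has_sum (q ^ E / P)) (Wset n d')"
    using Suc.IH[of d'] unfolding E_def P_def .
  have g1: "((\<lambda>a. q ^ (Suc n * a)) has_sum (1 / (1 - q ^ Suc n))) UNIV"
  proof -
    have "(\<lambda>a. q ^ (Suc n * a)) = (\<lambda>a. (q ^ Suc n) ^ a)" by (rule ext) (rule power_mult)
    then show ?thesis using geom_has_sum[OF abs_pow_lt1[OF q, of n]] by simp
  qed
  have g2: "((\<lambda>v. q ^ (n * d 0) * q ^ (\<Sum>i<n. v i)) has_sum (q ^ (n * d 0) * (q ^ E / P))) (Wset n d')"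
    by (rule has_sum_cmult_right[OF IH])
  have pr: "((\<lambda>(a, v). q ^ (Suc n * a) * (q ^ (n * d 0) * q ^ (\<Sum>i<n. v i))) has_sum
      (1 / (1 - q ^ Suc n) * (q ^ (n * d 0) * (q ^ E / P)))) (UNIV \<times> Wset n d')"
    by (rule has_sum_times_real[OF g1 g2])
  define ii where "ii = (\<lambda>(a::nat, v::nat\<Rightarrow>nat). (\<lambda>j. if j < Suc n then (if j = 0 then a else v (j - 1) + a + d 0) else undefined))"
  define jj where "jj = (\<lambda>u::nat\<Rightarrow>nat. (u 0, (\<lambda>i. if i < n then u (Suc i) - u 0 - d 0 else undefined)))"
  have ge: "u 0 + d 0 \<le> u (Suc i)" if u: "u \<in> Wset (Suc n) d" and i: "i < n" for u i
  proof -
    have "u 0 + d 0 \<le> u (Suc 0)" using u i unfolding Wset_def by auto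
    also have "u (Suc 0) \<le> u (Suc i)" using Wset_chain[OF u, of "Suc 0" "Suc i"] i by simp
    finally show ?thesis .
  qed
  have "((\<lambda>u. q ^ (\<Sum>i<Suc n. u i)) has_sum (1 / (1 - q ^ Suc n) * (q ^ (n * d 0) * (q ^ E / P)))) (Wset (Suc n) d)
     = ((\<lambda>(a, v). q ^ (Suc n * a) * (q ^ (n * d 0) * q ^ (\<Sum>i<n. v i))) has_sum
      (1 / (1 - q ^ Suc n) * (q ^ (n * d 0) * (q ^ E / P)))) (UNIV \<times> Wset n d')"
  proof (rule has_sum_reindex_bij_witness[where i = ii and j = jj])
    fix u assume u: "u \<in> Wset (Suc n) d"
    have ue: "u j = undefined" if "\<not> j < Suc n" for j using u that unfolding Wset_def by (auto simp: PiE_def extensional_def)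
    show "ii (jj u) = u"
    proof
      fix j show "ii (jj u) j = u j"
      proof (cases "j < Suc n")
        case True
        show ?thesis
        proof (cases j)
          case 0 then show ?thesis by (simp add: ii_def jj_def)
        next
          case (Suc j')
          then have "j' < n" using True by simp
          then show ?thesis using ge[OF u \<open>j' < n\<close>] Suc by (simp add: ii_def jj_def)
        qed
      next
        case False then show ?thesis using ue[OF False] by (simp add: ii_def jj_def)
      qed
    qed
    show "jj u \<in> UNIV \<times> Wset n d'"
    proof -
      have "\<forall>i. Suc i < n \<longrightarrow> (u (Suc i) - u 0 - d 0) + d' i \<le> u (Suc (Suc i)) - u 0 - d 0"
      proof (intro allI impI)
        fix i assume i: "Suc i < n"
        have "u (Suc i) + d (Suc i) \<le> u (Suc (Suc i))" using u i unfolding Wset_def by auto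
        moreover have "u 0 + d 0 \<le> u (Suc i)" using ge[OF u, of i] i by simp
        ultimately show "(u (Suc i) - u 0 - d 0) + d' i \<le> u (Suc (Suc i)) - u 0 - d 0"
          unfolding d'_def by linarith
      qed
      then show ?thesis unfolding jj_def Wset_def by (auto simp: PiE_def extensional_def)
    qed
    have "(\<Sum>i<n. u (Suc i) - u 0 - d 0) + n * (u 0 + d 0) = (\<Sum>i<n. u (Suc i))"
    proof -
      have "(\<Sum>i<n. u (Suc i) - u 0 - d 0) + n * (u 0 + d 0) = (\<Sum>i<n. (u (Suc i) - u 0 - d 0) + (u 0 + d 0))"
        by (simp add: sum.distrib)
      also have "\<dots> = (\<Sum>i<n. u (Suc i))"
        by (rule sum.cong) (use ge[OF u] in auto)
      finally show ?thesis .
    qed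
    moreover have "(\<Sum>i<Suc n. u i) = u 0 + (\<Sum>i<n. u (Suc i))" by (rule sum.lessThan_Suc_shift)
    moreover have "Suc n * u 0 = u 0 + n * u 0" "n * (u 0 + d 0) = n * u 0 + n * d 0"
      by (simp_all add: algebra_simps)
    ultimately have ex: "Suc n * u 0 + (n * d 0 + (\<Sum>i<n. u (Suc i) - u 0 - d 0)) = (\<Sum>i<Suc n. u i)"
      by linarith
    have "(\<Sum>i<n. (if i < n then u (Suc i) - u 0 - d 0 else undefined)) = (\<Sum>i<n. u (Suc i) - u 0 - d 0)"
      by (rule sum.cong) auto
    then show "(\<lambda>(a, v). q ^ (Suc n * a) * (q ^ (n * d 0) * q ^ (\<Sum>i<n. v i))) (jj u) = q ^ (\<Sum>i<Suc n. u i)"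
      unfolding jj_def using ex by (simp add: power_add[symmetric])
  next
    fix b assume b: "b \<in> (UNIV::nat set) \<times> Wset n d'"
    obtain a v where ab: "b = (a, v)" by (cases b)
    have v: "v \<in> Wset n d'" using b ab by simp
    have ve: "v j = undefined" if "\<not> j < n" for j using v that unfolding Wset_def by (auto simp: PiE_def extensional_def)
    show "jj (ii b) = b"
    proof -
      have "(\<lambda>i. if i < n then ii b (Suc i) - ii b 0 - d 0 else undefined) = v"
      proof
        fix i show "(if i < n then ii b (Suc i) - ii b 0 - d 0 else undefined) = v i"
          using ve[of i] by (simp add: ii_def ab)
      qed
      then show ?thesis unfolding jj_def by (simp add: ii_def ab)
    qed
    show "ii b \<in> Wset (Suc n) d"
      unfolding Wset_def
    proof (intro CollectI conjI allI impI)
      show "ii b \<in> {..<Suc n} \<rightarrow>\<^sub>E UNIV" by (simp add: ii_def ab PiE_def extensional_def)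
      fix i assume i: "Suc i < Suc n"
      show "ii b i + d i \<le> ii b (Suc i)"
      proof (cases i)
        case 0 then show ?thesis using i by (simp add: ii_def ab)
      next
        case (Suc i')
        have "v i' + d' i' \<le> v (Suc i')" using v i Suc unfolding Wset_def by auto
        then show ?thesis using i Suc by (simp add: ii_def ab d'_def)
      qed
    qed
  qed simp
  moreover have "1 / (1 - q ^ Suc n) * (q ^ (n * d 0) * (q ^ E / P)) =
     q ^ (\<Sum>i<Suc n. d i * (Suc n - Suc i)) / (\<Prod>i<Suc n. (1 - q ^ Suc i))"
  proof -
    have "(\<Sum>i<Suc n. d i * (Suc n - Suc i)) = n * d 0 + E"
    proof -
      have "(\<Sum>i<Suc n. d i * (Suc n - Suc i)) = d 0 * (Suc n - Suc 0) + (\<Sum>i<n. d (Suc i) * (Suc n - Suc (Suc i)))"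
        by (rule sum.lessThan_Suc_shift)
      then show ?thesis unfolding E_def d'_def by simp
    qed
    moreover have "(\<Prod>i<Suc n. (1 - q ^ Suc i)) = P * (1 - q ^ Suc n)"
      unfolding P_def by simp
    ultimately show ?thesis by (simp add: power_add field_simps)
  qed
  ultimately show ?case using pr by simp
qed



definition Cset :: "nat \<Rightarrow> (nat \<Rightarrow> nat) \<Rightarrow> (nat \<Rightarrow> nat) set" where
  "Cset n \<sigma> = {c \<in> {1..n} \<rightarrow>\<^sub>E (UNIV::nat set). sorts n \<sigma> c}"

lemma comaj_shift:
  "comaj n \<sigma> = (\<Sum>i<n. (if \<sigma> (Suc i) > \<sigma> (Suc (Suc i)) then 1 else 0) * (n - Suc i))"
proof -
  define f where "f k = (if \<sigma> k > \<sigma> (Suc k) then n - k else 0)" for k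
  have "(\<Sum>i<n. (if \<sigma> (Suc i) > \<sigma> (Suc (Suc i)) then 1 else 0) * (n - Suc i)) = (\<Sum>i\<in>{0..<n}. f (Suc i))"
    by (rule sum.cong) (auto simp: f_def)
  also have "\<dots> = (\<Sum>k\<in>{Suc 0..<Suc n}. f k)" by (rule sum.shift_bounds_Suc_ivl[symmetric])
  also have "\<dots> = (\<Sum>k\<in>{1..<n}. f k)"
  proof (cases n)
    case 0 then show ?thesis by simp
  next
    case (Suc m)
    have "(\<Sum>k\<in>{Suc 0..<Suc n}. f k) = (\<Sum>k\<in>{Suc 0..<n}. f k) + f n"
      by (rule sum.atLeastLessThan_Suc) (simp add: Suc)
    then show ?thesis by (simp add: f_def)
  qed
  finally show ?thesis unfolding comaj_def f_def by simp
qed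

lemma qpoch_alt: "qpoch q q n = (\<Prod>i<n. (1 - q ^ Suc i))"
  unfolding qpoch_def by simp

lemma A_has_sum:
  fixes q :: real
  assumes q: "\<bar>q\<bar> < 1" and s: "\<sigma> permutes {1..n}"
  shows "((\<lambda>c. q ^ (\<Sum>i\<in>{1..n}. c i)) has_sum (q ^ comaj n \<sigma> / qpoch q q n)) (Cset n \<sigma>)"
proof -
  define d where "d i = (if \<sigma> (Suc i) > \<sigma> (Suc (Suc i)) then 1 else (0::nat))" for i
  have W: "((\<lambda>u. q ^ (\<Sum>i<n. u i)) has_sum (q ^ comaj n \<sigma> / qpoch q q n)) (Wset n d)"
    using W_has_sum[OF q, of n d] unfolding comaj_shift qpoch_alt d_def .
  define ii where "ii = (\<lambda>u::nat\<Rightarrow>nat. \<lambda>p. if p \<in> {1..n} then u (inv \<sigma> p - 1) else undefined)"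
  define jj where "jj = (\<lambda>c::nat\<Rightarrow>nat. \<lambda>i. if i < n then c (\<sigma> (Suc i)) else undefined)"
  have sinv: "\<sigma> (inv \<sigma> p) = p" for p using permutes_inverses(1)[OF s] .
  have invs: "inv \<sigma> (\<sigma> p) = p" for p using permutes_inverses(2)[OF s] .
  have sin: "\<sigma> p \<in> {1..n} \<longleftrightarrow> p \<in> {1..n}" for p using permutes_in_image[OF s] by simp
  have iin: "inv \<sigma> p \<in> {1..n} \<longleftrightarrow> p \<in> {1..n}" for p
    using permutes_in_image[OF permutes_inv[OF s]] by simp
  have "((\<lambda>c. q ^ (\<Sum>i\<in>{1..n}. c i)) has_sum (q ^ comaj n \<sigma> / qpoch q q n)) (Cset n \<sigma>) =
        ((\<lambda>u. q ^ (\<Sum>i<n. u i)) has_sum (q ^ comaj n \<sigma> / qpoch q q n)) (Wset n d)"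
  proof (rule has_sum_reindex_bij_witness[where i = ii and j = jj])
    fix c assume c: "c \<in> Cset n \<sigma>"
    have ce: "c p = undefined" if "p \<notin> {1..n}" for p
      using c that unfolding Cset_def by (auto simp: PiE_def extensional_def)
    have so: "sorts n \<sigma> c" using c unfolding Cset_def by simp
    show "ii (jj c) = c"
    proof
      fix p show "ii (jj c) p = c p"
      proof (cases "p \<in> {1..n}")
        case True
        then have "inv \<sigma> p \<in> {1..n}" using iin by simp
        then have "inv \<sigma> p - 1 < n" "Suc (inv \<sigma> p - 1) = inv \<sigma> p" by auto
        then show ?thesis using True by (simp add: ii_def jj_def sinv)
      next
        case False then show ?thesis unfolding ii_def using ce[OF False] by (simp only: if_not_P[OF False] if_False)
      qed
    qed
    show "jj c \<in> Wset n d"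
      unfolding Wset_def
    proof (intro CollectI conjI allI impI)
      show "jj c \<in> {..<n} \<rightarrow>\<^sub>E UNIV" by (simp add: jj_def PiE_def extensional_def)
      fix i assume i: "Suc i < n"
      have "lexl c (\<sigma> (Suc i)) (\<sigma> (Suc (Suc i)))"
        by (rule sorts_consec[OF so]) (use i in simp)
      then show "jj c i + d i \<le> jj c (Suc i)"
        using i by (auto simp: jj_def d_def lexl_def)
    qed
    show "q ^ (\<Sum>i<n. jj c i) = q ^ (\<Sum>i\<in>{1..n}. c i)"
    proof -
      have "(\<Sum>i<n. jj c i) = (\<Sum>i\<in>{0..<n}. c (\<sigma> (Suc i)))"
        by (rule sum.cong) (auto simp: jj_def)
      also have "\<dots> = (\<Sum>k\<in>{Suc 0..<Suc n}. c (\<sigma> k))" by (rule sum.shift_bounds_Suc_ivl[symmetric])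
      also have "\<dots> = (\<Sum>k\<in>{1..n}. c (\<sigma> k))" by (rule sum.cong) auto
      also have "\<dots> = (\<Sum>k\<in>{1..n}. c k)" using sum.permute[OF s, of c] by (simp add: o_def)
      finally show ?thesis by simp
    qed
  next
    fix u assume u: "u \<in> Wset n d"
    have ue: "u i = undefined" if "\<not> i < n" for i
      using u that unfolding Wset_def by (auto simp: PiE_def extensional_def)
    show "jj (ii u) = u"
    proof
      fix i show "jj (ii u) i = u i"
      proof (cases "i < n")
        case True
        then have "\<sigma> (Suc i) \<in> {1..n}" using sin by simp
        then show ?thesis using True by (simp add: ii_def jj_def invs)
      next
        case False then show ?thesis using ue[OF False] by (simp add: jj_def)
      qed
    qed
    show "ii u \<in> Cset n \<sigma>"
      unfolding Cset_def
    proof (intro CollectI conjI)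
      show "ii u \<in> {1..n} \<rightarrow>\<^sub>E UNIV" by (simp add: ii_def PiE_def extensional_def)
      show "sorts n \<sigma> (ii u)"
      proof (rule sorts_from_consec)
        fix k assume k: "k \<in> {1..<n}"
        have k1: "\<sigma> k \<in> {1..n}" "\<sigma> (Suc k) \<in> {1..n}" using k sin by auto
        have iu1: "ii u (\<sigma> k) = u (k - 1)" using k1 by (simp add: ii_def invs)
        have iu2: "ii u (\<sigma> (Suc k)) = u k" using k1 by (simp add: ii_def invs)
        have ne: "\<sigma> k \<noteq> \<sigma> (Suc k)" using permutes_inj[OF s] by (metis injD n_not_Suc_n)
        have "\<forall>i. Suc i < n \<longrightarrow> u i + d i \<le> u (Suc i)" using u unfolding Wset_def by blast
        moreover have "Suc (k - 1) < n" using k by simp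
        ultimately have "u (k - 1) + d (k - 1) \<le> u (Suc (k - 1))" by blast
        then have "u (k - 1) + d (k - 1) \<le> u k" using k by simp
        moreover have "d (k - 1) = (if \<sigma> k > \<sigma> (Suc k) then 1 else 0)" using k by (simp add: d_def)
        ultimately show "lexl (ii u) (\<sigma> k) (\<sigma> (Suc k))"
          unfolding lexl_def iu1 iu2 using ne by (auto split: if_splits)
      qed
    qed
  qed simp
  then show ?thesis using W by simp
qed



lemma foldr_comp_gen:
  "foldr (\<lambda>j acc. s j \<circ> acc) xs a = foldr (\<lambda>j acc. s j \<circ> acc) xs id \<circ> a"
  by (induction xs) (simp_all add: o_assoc)

lemma tuple_prod_Suc: "tuple_prod (Suc k) s = tuple_prod k s \<circ> s k"
proof -
  have "tuple_prod (Suc k) s = foldr (\<lambda>j acc. s j \<circ> acc) [0..<k] (s k \<circ> id)"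
    unfolding tuple_prod_def by simp
  also have "\<dots> = tuple_prod k s \<circ> s k"
    unfolding tuple_prod_def by (subst foldr_comp_gen) simp
  finally show ?thesis .
qed

lemma tuple_prod_0: "tuple_prod 0 s = id"
  unfolding tuple_prod_def by simp

lemma tuple_prod_cong:
  assumes "\<And>j. j < k \<Longrightarrow> s j = s' j"
  shows "tuple_prod k s = tuple_prod k s'"
  using assms
proof (induction k)
  case 0 then show ?case by (simp add: tuple_prod_0)
next
  case (Suc k) then show ?case by (simp add: tuple_prod_Suc)
qed

lemma tuple_prod_permutes:
  assumes "\<And>j. j < k \<Longrightarrow> s j permutes S"
  shows "tuple_prod k s permutes S"
  using assms
proof (induction k)
  case 0 show ?case unfolding tuple_prod_0 by (rule permutes_id)
next
  case (Suc k) show ?case unfolding tuple_prod_Suc by (rule permutes_compose) (use Suc in auto)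
qed

definition Pn :: "nat \<Rightarrow> (nat \<Rightarrow> nat) set" where
  "Pn n = {\<sigma>. \<sigma> permutes {1..n}}"

definition Tk :: "nat \<Rightarrow> nat \<Rightarrow> (nat \<Rightarrow> nat) \<Rightarrow> (nat \<Rightarrow> nat \<Rightarrow> nat) set" where
  "Tk n k \<tau> = {s \<in> {0..<k} \<rightarrow>\<^sub>E Pn n. tuple_prod k s = \<tau>}"

definition Nk :: "(nat \<Rightarrow> real) \<Rightarrow> nat \<Rightarrow> nat \<Rightarrow> (nat \<Rightarrow> nat) \<Rightarrow> real" where
  "Nk q n k \<tau> = (\<Sum>s\<in>Tk n k \<tau>. \<Prod>j<k. q j ^ comaj n (s j))"

definition Fk :: "(nat \<Rightarrow> real) \<Rightarrow> nat \<Rightarrow> nat \<Rightarrow> (nat \<Rightarrow> nat) \<Rightarrow> real" where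
  "Fk q n k \<tau> = Nk q n k \<tau> / (\<Prod>j<k. qpoch (q j) (q j) n)"

lemma finite_Pn: "finite (Pn n)"
  unfolding Pn_def by (rule finite_permutations) simp

lemma finite_Tk: "finite (Tk n k \<tau>)"
proof -
  have "finite ({0..<k} \<rightarrow>\<^sub>E Pn n)" by (intro finite_PiE finite_Pn) simp
  then show ?thesis unfolding Tk_def by simp
qed

lemma Nk_Suc:
  assumes t: "\<tau> permutes {1..n}"
  shows "Nk q n (Suc k) \<tau> = (\<Sum>\<rho>\<in>Pn n. Nk q n k \<rho> * q k ^ comaj n (inv \<rho> \<circ> \<tau>))"
proof -
  have "(\<Sum>\<rho>\<in>Pn n. Nk q n k \<rho> * q k ^ comaj n (inv \<rho> \<circ> \<tau>))
      = (\<Sum>\<rho>\<in>Pn n. \<Sum>s\<in>Tk n k \<rho>. (\<Prod>j<k. q j ^ comaj n (s j)) * q k ^ comaj n (inv \<rho> \<circ> \<tau>))"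
    unfolding Nk_def by (simp add: sum_distrib_right)
  also have "\<dots> = (\<Sum>(\<rho>, s)\<in>Sigma (Pn n) (Tk n k). (\<Prod>j<k. q j ^ comaj n (s j)) * q k ^ comaj n (inv \<rho> \<circ> \<tau>))"
    by (rule sum.Sigma) (simp_all add: finite_Pn finite_Tk)
  also have "\<dots> = Nk q n (Suc k) \<tau>"
    unfolding Nk_def
  proof (rule sym, rule sum.reindex_bij_witness[where j = "\<lambda>s. (tuple_prod k s, restrict s {0..<k})"
        and i = "\<lambda>(\<rho>, s'). s'(k := inv \<rho> \<circ> \<tau>)"])
    fix s assume s: "s \<in> Tk n (Suc k) \<tau>"
    define \<rho> where "\<rho> = tuple_prod k s"
    have sP: "s j \<in> Pn n" if "j < Suc k" for j using s that unfolding Tk_def by auto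
    have se: "s j = undefined" if "\<not> j < Suc k" for j using s that unfolding Tk_def by (auto simp: PiE_def extensional_def)
    have rp: "\<rho> permutes {1..n}" unfolding \<rho>_def
      by (rule tuple_prod_permutes) (use sP in \<open>auto simp: Pn_def\<close>)
    have "\<tau> = \<rho> \<circ> s k" using s unfolding Tk_def \<rho>_def by (simp add: tuple_prod_Suc)
    then have sk: "s k = inv \<rho> \<circ> \<tau>" using permutes_inv_o(2)[OF rp] by (simp add: o_assoc)
    show "(case (tuple_prod k s, restrict s {0..<k}) of (\<rho>, s') \<Rightarrow> s'(k := inv \<rho> \<circ> \<tau>)) = s"
    proof
      fix j show "(case (tuple_prod k s, restrict s {0..<k}) of (\<rho>, s') \<Rightarrow> s'(k := inv \<rho> \<circ> \<tau>)) j = s j"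
        using sk se[of j] by (auto simp: \<rho>_def)
    qed
    have tc: "tuple_prod k (restrict s {0..<k}) = tuple_prod k s" by (rule tuple_prod_cong) simp
    show "(tuple_prod k s, restrict s {0..<k}) \<in> Sigma (Pn n) (Tk n k)"
      using rp sP tc unfolding Tk_def Pn_def \<rho>_def by auto
    have "(\<Prod>j<k. q j ^ comaj n (restrict s {0..<k} j)) = (\<Prod>j<k. q j ^ comaj n (s j))"
      by (rule prod.cong) auto
    then show "(case (tuple_prod k s, restrict s {0..<k}) of (\<rho>, s) \<Rightarrow> (\<Prod>j<k. q j ^ comaj n (s j)) * q k ^ comaj n (inv \<rho> \<circ> \<tau>))
        = (\<Prod>j<Suc k. q j ^ comaj n (s j))"
      using sk by (simp add: \<rho>_def)
  next
    fix b assume b: "b \<in> Sigma (Pn n) (Tk n k)"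
    obtain \<rho> s' where bb: "b = (\<rho>, s')" by (cases b)
    have rp: "\<rho> permutes {1..n}" and s': "s' \<in> Tk n k \<rho>" using b bb by (auto simp: Pn_def)
    have se: "s' j = undefined" if "\<not> j < k" for j using s' that unfolding Tk_def by (auto simp: PiE_def extensional_def)
    have tc: "tuple_prod k (s'(k := inv \<rho> \<circ> \<tau>)) = \<rho>"
    proof -
      have "tuple_prod k (s'(k := inv \<rho> \<circ> \<tau>)) = tuple_prod k s'" by (rule tuple_prod_cong) simp
      then show ?thesis using s' unfolding Tk_def by simp
    qed
    show "(tuple_prod k ((case b of (\<rho>, s') \<Rightarrow> s'(k := inv \<rho> \<circ> \<tau>))),
           restrict (case b of (\<rho>, s') \<Rightarrow> s'(k := inv \<rho> \<circ> \<tau>)) {0..<k}) = b"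
    proof -
      have "restrict (s'(k := inv \<rho> \<circ> \<tau>)) {0..<k} = s'"
      proof
        fix j show "restrict (s'(k := inv \<rho> \<circ> \<tau>)) {0..<k} j = s' j"
          using se[of j] by auto
      qed
      then show ?thesis using tc bb by simp
    qed
    have ip: "inv \<rho> \<circ> \<tau> permutes {1..n}" by (intro permutes_compose permutes_inv rp t)
    have "tuple_prod (Suc k) (s'(k := inv \<rho> \<circ> \<tau>)) = \<tau>"
      using tc permutes_inv_o(1)[OF rp] by (simp add: tuple_prod_Suc o_assoc)
    moreover have "s'(k := inv \<rho> \<circ> \<tau>) \<in> {0..<Suc k} \<rightarrow>\<^sub>E Pn n"
      using s' ip se unfolding Tk_def Pn_def by (auto simp: PiE_def extensional_def Pi_def)
    ultimately show "(case b of (\<rho>, s') \<Rightarrow> s'(k := inv \<rho> \<circ> \<tau>)) \<in> Tk n (Suc k) \<tau>"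
      unfolding Tk_def using bb by simp
  qed
  finally show ?thesis ..
qed

lemma Fk_Suc:
  assumes t: "\<tau> permutes {1..n}"
  shows "Fk q n (Suc k) \<tau> = (\<Sum>\<rho>\<in>Pn n. Fk q n k \<rho> * (q k ^ comaj n (inv \<rho> \<circ> \<tau>) / qpoch (q k) (q k) n))"
  unfolding Fk_def Nk_Suc[OF t] by (simp add: sum_divide_distrib)



definition SV :: "nat \<Rightarrow> nat \<Rightarrow> (nat \<Rightarrow> nat) \<Rightarrow> (nat \<Rightarrow> nat list) set" where
  "SV n k \<tau> = {V \<in> {1..n} \<rightarrow>\<^sub>E exps k. sorts n \<tau> (\<lambda>i. rev (V i))}"

definition wt :: "(nat \<Rightarrow> real) \<Rightarrow> nat \<Rightarrow> nat \<Rightarrow> (nat \<Rightarrow> nat list) \<Rightarrow> real" where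
  "wt q n k V = (\<Prod>i\<in>{1..n}. monomial q k (V i))"

lemma comp_sorts:
  fixes R V :: "nat \<Rightarrow> nat list" and c :: "nat \<Rightarrow> nat"
  assumes rp: "\<rho> permutes {1..n}" and rs: "sorts n \<rho> (\<lambda>i. rev (R i))"
    and sp: "\<sigma> permutes {1..n}" and ss: "sorts n \<sigma> c"
    and V: "\<And>m. m \<in> {1..n} \<Longrightarrow> V (\<rho> m) = R (\<rho> m) @ [c m]"
  shows "sorts n (\<rho> \<circ> \<sigma>) (\<lambda>i. rev (V i))"
  unfolding sorts_def
proof (intro ballI impI)
  fix i j assume i: "i \<in> {1..n}" and j: "j \<in> {1..n}" and ij: "i < j"
  define m where "m = \<sigma> i"
  define m' where "m' = \<sigma> j"
  have mm: "m \<in> {1..n}" "m' \<in> {1..n}" unfolding m_def m'_def using i j permutes_in_image[OF sp] by auto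
  have l: "lexl c m m'" unfolding m_def m'_def by (rule sortsD[OF ss i j ij])
  have rv: "rev (V (\<rho> m)) = c m # rev (R (\<rho> m))" "rev (V (\<rho> m')) = c m' # rev (R (\<rho> m'))"
    using V[OF mm(1)] V[OF mm(2)] by simp_all
  show "lexl (\<lambda>i. rev (V i)) ((\<rho> \<circ> \<sigma>) i) ((\<rho> \<circ> \<sigma>) j)"
  proof -
    have "lexl (\<lambda>i. rev (V i)) (\<rho> m) (\<rho> m')"
    proof (cases "c m < c m'")
      case True then show ?thesis unfolding lexl_def rv by simp
    next
      case False
      then have eq: "c m = c m'" and lt: "m < m'" using l unfolding lexl_def by auto
      have "lexl (\<lambda>i. rev (R i)) (\<rho> m) (\<rho> m')" by (rule sortsD[OF rs mm lt])
      then show ?thesis unfolding lexl_def rv eq by auto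
    qed
    then show ?thesis unfolding m_def m'_def by simp
  qed
qed

definition stdR :: "nat \<Rightarrow> (nat \<Rightarrow> nat list) \<Rightarrow> nat \<Rightarrow> nat" where
  "stdR n R = (THE \<rho>. \<rho> permutes {1..n} \<and> sorts n \<rho> (\<lambda>i. rev (R i)))"

lemma stdR_prop: "stdR n R permutes {1..n} \<and> sorts n (stdR n R) (\<lambda>i. rev (R i))"
proof -
  obtain \<rho> where r: "\<rho> permutes {1..n} \<and> sorts n \<rho> (\<lambda>i. rev (R i))" using sorts_exists by blast
  have "\<exists>!\<rho>. \<rho> permutes {1..n} \<and> sorts n \<rho> (\<lambda>i. rev (R i))"
    using r sorts_unique by blast
  then show ?thesis unfolding stdR_def by (rule theI')
qed

lemma stdR_eq: "\<rho> permutes {1..n} \<Longrightarrow> sorts n \<rho> (\<lambda>i. rev (R i)) \<Longrightarrow> stdR n R = \<rho>"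
  using stdR_prop sorts_unique by blast

lemma monomial_Suc:
  assumes "length a = Suc k"
  shows "monomial q (Suc k) a = monomial q k (butlast a) * q k ^ last a"
proof -
  have "monomial q k (butlast a) = (\<Prod>j<k. q j ^ (a ! j))"
    unfolding monomial_def by (rule prod.cong) (use assms in \<open>auto simp: nth_butlast\<close>)
  moreover have "a ! k = last a"
  proof -
    have "a \<noteq> []" using assms by auto
    then have "last a = a ! (length a - 1)" by (rule last_conv_nth)
    then show ?thesis using assms by simp
  qed
  ultimately show ?thesis unfolding monomial_def by simp
qed

lemma main_step:
  fixes q :: "nat \<Rightarrow> real"
  assumes qk: "\<bar>q k\<bar> < 1" and t: "\<tau> permutes {1..n}"
    and IH: "\<And>\<rho>. \<rho> permutes {1..n} \<Longrightarrow> (wt q n k has_sum Fk q n k \<rho>) (SV n k \<rho>)"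
  shows "(wt q n (Suc k) has_sum Fk q n (Suc k) \<tau>) (SV n (Suc k) \<tau>)"
proof -
  define h where "h = (\<lambda>(\<rho>::nat\<Rightarrow>nat, R, c::nat\<Rightarrow>nat). wt q n k R * q k ^ (\<Sum>i\<in>{1..n}. c i))"
  define T where "T = Sigma (Pn n) (\<lambda>\<rho>. SV n k \<rho> \<times> Cset n (inv \<rho> \<circ> \<tau>))"
  have hs: "(h has_sum (\<Sum>\<rho>\<in>Pn n. Fk q n k \<rho> * (q k ^ comaj n (inv \<rho> \<circ> \<tau>) / qpoch (q k) (q k) n))) T"
    unfolding T_def
  proof (rule has_sum_Sigma_finite[OF finite_Pn])
    fix \<rho> assume "\<rho> \<in> Pn n"
    then have rp: "\<rho> permutes {1..n}" by (simp add: Pn_def)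
    have ip: "inv \<rho> \<circ> \<tau> permutes {1..n}" by (intro permutes_compose permutes_inv rp t)
    have "((\<lambda>(R, c). wt q n k R * q k ^ (\<Sum>i\<in>{1..n}. c i)) has_sum
        (Fk q n k \<rho> * (q k ^ comaj n (inv \<rho> \<circ> \<tau>) / qpoch (q k) (q k) n))) (SV n k \<rho> \<times> Cset n (inv \<rho> \<circ> \<tau>))"
      by (rule has_sum_times_real[OF IH[OF rp] A_has_sum[OF qk ip]])
    then show "((\<lambda>y. h (\<rho>, y)) has_sum (Fk q n k \<rho> * (q k ^ comaj n (inv \<rho> \<circ> \<tau>) / qpoch (q k) (q k) n)))
        (SV n k \<rho> \<times> Cset n (inv \<rho> \<circ> \<tau>))"
      unfolding h_def by simp
  qed
  define Rof where "Rof V = (\<lambda>i. if i \<in> {1..n} then butlast (V i) else undefined)" for V :: "nat \<Rightarrow> nat list"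
  define cof where "cof V = (\<lambda>m. if m \<in> {1..n} then last (V (stdR n (Rof V) m)) else undefined)" for V :: "nat \<Rightarrow> nat list"
  define jj where "jj V = (stdR n (Rof V), Rof V, cof V)" for V
  define ii where "ii = (\<lambda>(\<rho>::nat\<Rightarrow>nat, R::nat\<Rightarrow>nat list, c::nat\<Rightarrow>nat).
      (\<lambda>i. if i \<in> {1..n} then R i @ [c (inv \<rho> i)] else undefined))"
  have "(wt q n (Suc k) has_sum (\<Sum>\<rho>\<in>Pn n. Fk q n k \<rho> * (q k ^ comaj n (inv \<rho> \<circ> \<tau>) / qpoch (q k) (q k) n))) (SV n (Suc k) \<tau>)
      = (h has_sum (\<Sum>\<rho>\<in>Pn n. Fk q n k \<rho> * (q k ^ comaj n (inv \<rho> \<circ> \<tau>) / qpoch (q k) (q k) n))) T"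
  proof (rule has_sum_reindex_bij_witness[where i = ii and j = jj])
    fix V assume V: "V \<in> SV n (Suc k) \<tau>"
    have Vl: "length (V i) = Suc k" if "i \<in> {1..n}" for i using V that unfolding SV_def exps_def by auto
    have Ve: "V i = undefined" if "i \<notin> {1..n}" for i using V that unfolding SV_def by (auto simp: PiE_def extensional_def)
    have Vs: "sorts n \<tau> (\<lambda>i. rev (V i))" using V unfolding SV_def by simp
    define \<rho> where "\<rho> = stdR n (Rof V)"
    have rp: "\<rho> permutes {1..n}" and rs: "sorts n \<rho> (\<lambda>i. rev (Rof V i))" using stdR_prop unfolding \<rho>_def by blast+
    have rin: "\<rho> m \<in> {1..n} \<longleftrightarrow> m \<in> {1..n}" for m using permutes_in_image[OF rp] by simp
    have iin: "inv \<rho> m \<in> {1..n} \<longleftrightarrow> m \<in> {1..n}" for m using permutes_in_image[OF permutes_inv[OF rp]] by simp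
    have rinv: "\<rho> (inv \<rho> m) = m" for m using permutes_inverses(1)[OF rp] .
    have invr: "inv \<rho> (\<rho> m) = m" for m using permutes_inverses(2)[OF rp] .
    obtain \<sigma> where sp: "\<sigma> permutes {1..n}" and ss: "sorts n \<sigma> (cof V)" using sorts_exists by blast
    have Rofi: "Rof V i = butlast (V i)" if "i \<in> {1..n}" for i using that by (simp add: Rof_def)
    have cofm: "cof V m = last (V (\<rho> m))" if "m \<in> {1..n}" for m using that by (simp add: cof_def \<rho>_def)
    have jjV: "jj V = (\<rho>, Rof V, cof V)" by (simp add: jj_def \<rho>_def)
    have Vne: "V i \<noteq> []" if "i \<in> {1..n}" for i using Vl[OF that] by (metis Zero_not_Suc list.size(3))
    have Vdec: "V (\<rho> m) = Rof V (\<rho> m) @ [cof V m]" if "m \<in> {1..n}" for m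
    proof -
      have rm: "\<rho> m \<in> {1..n}" using that rin by simp
      show ?thesis unfolding Rofi[OF rm] cofm[OF that] using append_butlast_last_id[OF Vne[OF rm]] by simp
    qed
    have "sorts n (\<rho> \<circ> \<sigma>) (\<lambda>i. rev (V i))" by (rule comp_sorts[OF rp rs sp ss Vdec])
    then have "\<rho> \<circ> \<sigma> = \<tau>" using sorts_unique[OF permutes_compose[OF sp rp] _ t Vs] by blast
    then have sig: "\<sigma> = inv \<rho> \<circ> \<tau>" using permutes_inv_o(2)[OF rp] by (metis o_assoc id_o)
    show "ii (jj V) = V"
    proof
      fix i show "ii (jj V) i = V i"
      proof (cases "i \<in> {1..n}")
        case True
        then have "inv \<rho> i \<in> {1..n}" using iin by simp
        then have "cof V (inv \<rho> i) = last (V i)" using cofm rinv by simp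
        then show ?thesis using True Vne[OF True] by (simp add: ii_def jjV Rofi)
      next
        case False then show ?thesis unfolding ii_def jjV using Ve[OF False] by (simp only: prod.case if_not_P[OF False] if_False)
      qed
    qed
    show "jj V \<in> T"
    proof -
      have "Rof V \<in> SV n k \<rho>"
        unfolding SV_def using rs Vl by (auto simp: Rof_def PiE_def extensional_def exps_def)
      moreover have "cof V \<in> Cset n (inv \<rho> \<circ> \<tau>)"
        unfolding Cset_def using ss sig by (auto simp: cof_def PiE_def extensional_def)
      ultimately show ?thesis unfolding jjV T_def using rp by (simp add: Pn_def)
    qed
    show "h (jj V) = wt q n (Suc k) V"
    proof -
      have "wt q n (Suc k) V = (\<Prod>i\<in>{1..n}. monomial q k (Rof V i) * q k ^ last (V i))"
        unfolding wt_def by (rule prod.cong) (simp_all add: Rof_def monomial_Suc Vl)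
      also have "\<dots> = wt q n k (Rof V) * q k ^ (\<Sum>i\<in>{1..n}. last (V i))"
        by (simp add: prod.distrib wt_def power_sum)
      also have "(\<Sum>i\<in>{1..n}. last (V i)) = (\<Sum>m\<in>{1..n}. cof V m)"
      proof -
        have "(\<Sum>i\<in>{1..n}. last (V i)) = (\<Sum>m\<in>{1..n}. last (V (\<rho> m)))"
          using sum.permute[OF rp, of "\<lambda>i. last (V i)"] by (simp add: o_def)
        also have "\<dots> = (\<Sum>m\<in>{1..n}. cof V m)"
          by (rule sum.cong) (simp_all add: cofm)
        finally show ?thesis .
      qed
      finally show ?thesis unfolding h_def jjV by simp
    qed
  next
    fix b assume b: "b \<in> T"
    obtain \<rho> R c where bb: "b = (\<rho>, R, c)" by (cases b) auto
    have rp: "\<rho> permutes {1..n}" and R: "R \<in> SV n k \<rho>" and c: "c \<in> Cset n (inv \<rho> \<circ> \<tau>)"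
      using b bb unfolding T_def by (auto simp: Pn_def)
    have ip: "inv \<rho> \<circ> \<tau> permutes {1..n}" by (intro permutes_compose permutes_inv rp t)
    have rs: "sorts n \<rho> (\<lambda>i. rev (R i))" using R unfolding SV_def by simp
    have Re: "R i = undefined" if "i \<notin> {1..n}" for i using R that unfolding SV_def by (auto simp: PiE_def extensional_def)
    have Rl: "length (R i) = k" if "i \<in> {1..n}" for i using R that unfolding SV_def exps_def by auto
    have ce: "c i = undefined" if "i \<notin> {1..n}" for i using c that unfolding Cset_def by (auto simp: PiE_def extensional_def)
    have cs: "sorts n (inv \<rho> \<circ> \<tau>) c" using c unfolding Cset_def by simp
    have rin: "\<rho> m \<in> {1..n} \<longleftrightarrow> m \<in> {1..n}" for m using permutes_in_image[OF rp] by simp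
    have iin: "inv \<rho> m \<in> {1..n} \<longleftrightarrow> m \<in> {1..n}" for m using permutes_in_image[OF permutes_inv[OF rp]] by simp
    have invr: "inv \<rho> (\<rho> m) = m" for m using permutes_inverses(2)[OF rp] .
    define V where "V = ii b"
    have Vi: "V i = R i @ [c (inv \<rho> i)]" if "i \<in> {1..n}" for i using that by (simp add: V_def ii_def bb)
    have RofV: "Rof V = R"
    proof
      fix i show "Rof V i = R i"
      proof (cases "i \<in> {1..n}")
        case True then show ?thesis by (simp add: Rof_def Vi)
      next
        case False then show ?thesis unfolding Rof_def using Re[OF False] by (simp only: if_not_P[OF False] if_False)
      qed
    qed
    have stdV: "stdR n (Rof V) = \<rho>" unfolding RofV by (rule stdR_eq[OF rp rs])
    have cofV: "cof V = c"
    proof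
      fix m show "cof V m = c m"
      proof (cases "m \<in> {1..n}")
        case True
        then have "\<rho> m \<in> {1..n}" using rin by simp
        then show ?thesis using True by (simp add: cof_def stdV Vi invr)
      next
        case False then show ?thesis unfolding cof_def using ce[OF False] by (simp only: if_not_P[OF False] if_False)
      qed
    qed
    have stdR': "stdR n R = \<rho>" by (rule stdR_eq[OF rp rs])
    have "jj V = b" unfolding jj_def RofV stdR' cofV bb ..
    then show "jj (ii b) = b" unfolding V_def .
    show "ii b \<in> SV n (Suc k) \<tau>"
      unfolding V_def[symmetric] SV_def
    proof (intro CollectI conjI)
      show "V \<in> {1..n} \<rightarrow>\<^sub>E exps (Suc k)"
        using Rl by (auto simp: V_def ii_def bb PiE_def extensional_def exps_def)
      have "sorts n (\<rho> \<circ> (inv \<rho> \<circ> \<tau>)) (\<lambda>i. rev (V i))"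
      proof (rule comp_sorts[OF rp rs ip cs])
        fix m assume "m \<in> {1..n}"
        then show "V (\<rho> m) = R (\<rho> m) @ [c m]" using rin Vi invr by simp
      qed
      moreover have "\<rho> \<circ> (inv \<rho> \<circ> \<tau>) = \<tau>" using permutes_inv_o(1)[OF rp] by (simp add: o_assoc)
      ultimately show "sorts n \<tau> (\<lambda>i. rev (V i))" by simp
    qed
  qed simp
  then show ?thesis using hs Fk_Suc[OF t, of q k] by simp
qed



lemma base_case:
  assumes t: "\<tau> permutes {1..n}"
  shows "(wt q n 0 has_sum Fk q n 0 \<tau>) (SV n 0 \<tau>)"
proof -
  define V0 where "V0 = (\<lambda>i::nat. if i \<in> {1..n} then ([]::nat list) else undefined)"
  have PiE0: "V \<in> {1..n} \<rightarrow>\<^sub>E exps 0 \<longleftrightarrow> V = V0" for V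
  proof
    assume V: "V \<in> {1..n} \<rightarrow>\<^sub>E exps 0"
    show "V = V0"
    proof
      fix i show "V i = V0 i"
      proof (cases "i \<in> {1..n}")
        case True then show ?thesis using V by (auto simp: V0_def exps_def PiE_def)
      next
        case False
        then have "V i = undefined" using V by (auto simp: PiE_def extensional_def)
        then show ?thesis unfolding V0_def by (simp only: if_not_P[OF False] if_False)
      qed
    qed
  next
    assume "V = V0"
    then show "V \<in> {1..n} \<rightarrow>\<^sub>E exps 0" by (auto simp: V0_def exps_def PiE_def extensional_def)
  qed
  have sid: "sorts n id (\<lambda>i. rev (V0 i))" unfolding sorts_def lexl_def by (auto simp: V0_def)
  have st: "sorts n \<tau> (\<lambda>i. rev (V0 i)) \<longleftrightarrow> \<tau> = id"
  proof
    assume "sorts n \<tau> (\<lambda>i. rev (V0 i))"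
    then show "\<tau> = id" using sorts_unique[OF t _ permutes_id sid] by blast
  next
    assume "\<tau> = id" then show "sorts n \<tau> (\<lambda>i. rev (V0 i))" using sid by simp
  qed
  have SV0: "SV n 0 \<tau> = (if \<tau> = id then {V0} else {})"
    unfolding SV_def using PiE0 st by auto
  have wt0: "wt q n 0 V0 = 1" unfolding wt_def monomial_def by simp
  have T0: "Tk n 0 \<tau> = (if \<tau> = id then {\<lambda>_. undefined} else {})"
    unfolding Tk_def by (auto simp: tuple_prod_0)
  have F0: "Fk q n 0 \<tau> = (if \<tau> = id then 1 else 0)"
    unfolding Fk_def Nk_def T0 by simp
  show ?thesis
  proof (cases "\<tau> = id")
    case True
    then show ?thesis unfolding SV0 F0 using wt0 by (simp add: has_sum_finiteI)
  next
    case False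
    then show ?thesis unfolding SV0 F0 by simp
  qed
qed

lemma main_all:
  fixes q :: "nat \<Rightarrow> real"
  assumes "\<And>j. j < k \<Longrightarrow> \<bar>q j\<bar> < 1"
  shows "\<tau> permutes {1..n} \<Longrightarrow> (wt q n k has_sum Fk q n k \<tau>) (SV n k \<tau>)"
  using assms
proof (induction k arbitrary: \<tau>)
  case 0 then show ?case using base_case by blast
next
  case (Suc k)
  show ?case
  proof (rule main_step)
    show "\<bar>q k\<bar> < 1" using Suc.prems by simp
    show "\<tau> permutes {1..n}" by (rule Suc.prems(1))
    fix \<rho> assume "\<rho> permutes {1..n}"
    then show "(wt q n k has_sum Fk q n k \<rho>) (SV n k \<rho>)" using Suc.IH Suc.prems(2) by simp
  qed
qed

definition Mof :: "nat \<Rightarrow> (nat \<Rightarrow> nat list) \<Rightarrow> nat list multiset" where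
  "Mof n V = image_mset V (mset_set {1..n})"

lemma mset_L: "mset (map V [1..<Suc n]) = Mof n V"
  unfolding Mof_def by (simp del: upt_Suc add: mset_upt atLeastLessThanSuc_atLeastAtMost)

lemma nthL: assumes "i \<in> {1..n}" shows "map V [1..<Suc n] ! (i - 1) = V i"
proof -
  have "i - 1 < n" using assms by auto
  then have l: "i - 1 < length [1..<Suc n]" by (simp del: upt_Suc)
  have "[1..<Suc n] ! (i - 1) = 1 + (i - 1)" using l by (simp del: upt_Suc add: nth_upt)
  then show ?thesis using l assms by (simp del: upt_Suc)
qed

lemma sorted_L:
  assumes "sorts n id (\<lambda>i. rev (V i))"
  shows "sorted (map rev (map V [1..<Suc n]))"
  unfolding sorted_iff_nth_mono_less
proof (intro allI impI)
  fix i j assume ij: "i < j" "j < length (map rev (map V [1..<Suc n]))"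
  then have "j < n" by (simp del: upt_Suc)
  then have "lexl (\<lambda>i. rev (V i)) (id (Suc i)) (id (Suc j))"
    using ij by (intro sortsD[OF assms]) auto
  then have "rev (V (Suc i)) \<le> rev (V (Suc j))" unfolding lexl_def by auto
  then show "map rev (map V [1..<Suc n]) ! i \<le> map rev (map V [1..<Suc n]) ! j"
    using ij \<open>j < n\<close> by (simp del: upt_Suc)
qed

lemma Mof_bij: "bij_betw (Mof n) (SV n k id) (h_index n k)"
proof -
  have inj: "inj_on (Mof n) (SV n k id)"
  proof (rule inj_onI)
    fix V V' assume V: "V \<in> SV n k id" and V': "V' \<in> SV n k id" and eq: "Mof n V = Mof n V'"
    have s1: "sorted (map rev (map V [1..<Suc n]))" using V unfolding SV_def by (intro sorted_L) simp
    have s2: "sorted (map rev (map V' [1..<Suc n]))" using V' unfolding SV_def by (intro sorted_L) simp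
    have "mset (map rev (map V [1..<Suc n])) = mset (map rev (map V' [1..<Suc n]))"
      using eq mset_L[of V n] mset_L[of V' n] by (metis mset_map)
    then have "map rev (map V [1..<Suc n]) = map rev (map V' [1..<Suc n])"
      using properties_for_sort[OF _ s1] properties_for_sort[OF _ s2] by metis
    then have "map rev (map rev (map V [1..<Suc n])) = map rev (map rev (map V' [1..<Suc n]))" by simp
    then have LL: "map V [1..<Suc n] = map V' [1..<Suc n]" by (simp add: o_def)
    show "V = V'"
    proof
      fix i show "V i = V' i"
      proof (cases "i \<in> {1..n}")
        case True
        have "map V [1..<Suc n] ! (i - 1) = map V' [1..<Suc n] ! (i - 1)" using LL by (simp only:)
        then show ?thesis using nthL[OF True, of V] nthL[OF True, of V'] by (simp only:)
      next
        case False
        then show ?thesis using V V' unfolding SV_def by (auto simp: PiE_def extensional_def)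
      qed
    qed
  qed
  have sub: "Mof n ` SV n k id \<subseteq> h_index n k"
  proof
    fix M assume "M \<in> Mof n ` SV n k id"
    then obtain V where V: "V \<in> SV n k id" and M: "M = Mof n V" by blast
    have "V i \<in> exps k" if "i \<in> {1..n}" for i using V that unfolding SV_def by auto
    then show "M \<in> h_index n k" unfolding M h_index_def Mof_def by auto
  qed
  have sup: "h_index n k \<subseteq> Mof n ` SV n k id"
  proof
    fix M assume M: "M \<in> h_index n k"
    obtain xs where xs: "mset xs = M" using ex_mset by blast
    define ys where "ys = sort (map rev xs)"
    define zs where "zs = map rev ys"
    have lzs: "length zs = n" using M xs unfolding zs_def ys_def h_index_def by (auto simp: length_sort)
    have szs: "set zs = set xs" unfolding zs_def ys_def by (simp add: image_image)
    have mzs: "mset zs = M" unfolding zs_def ys_def xs[symmetric]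
      by (simp add: mset_map multiset.map_comp o_def)
    have sys: "sorted ys" unfolding ys_def by simp
    define V where "V = (\<lambda>i. if i \<in> {1..n} then zs ! (i - 1) else undefined)"
    have LV: "map V [1..<Suc n] = zs"
      by (rule nth_equalityI) (simp_all del: upt_Suc add: lzs V_def)
    have "V \<in> SV n k id"
      unfolding SV_def
    proof (intro CollectI conjI)
      have "zs ! (i - 1) \<in> exps k" if "i \<in> {1..n}" for i
      proof -
        have "zs ! (i - 1) \<in> set zs" using that lzs by auto
        then show ?thesis using szs xs M unfolding h_index_def by auto
      qed
      then show "V \<in> {1..n} \<rightarrow>\<^sub>E exps k" by (auto simp: V_def PiE_def extensional_def)
      show "sorts n id (\<lambda>i. rev (V i))"
        unfolding sorts_def
      proof (intro ballI impI)
        fix i j assume ij: "i \<in> {1..n}" "j \<in> {1..n}" "i < j"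
        have "ys ! (i - 1) \<le> ys ! (j - 1)"
          using sys ij lzs unfolding zs_def by (intro sorted_nth_mono) auto
        moreover have "rev (V i) = ys ! (i - 1)" "rev (V j) = ys ! (j - 1)"
          using ij lzs by (auto simp: V_def zs_def)
        ultimately show "lexl (\<lambda>i. rev (V i)) (id i) (id j)"
          unfolding lexl_def using ij by auto
      qed
    qed
    moreover have "Mof n V = M"
    proof -
      have "Mof n V = mset (map V [1..<Suc n])" by (rule mset_L[symmetric])
      also have "\<dots> = mset zs" by (simp only: LV)
      finally show ?thesis using mzs by simp
    qed
    ultimately show "M \<in> Mof n ` SV n k id" by blast
  qed
  show ?thesis unfolding bij_betw_def using inj sub sup by blast
qed

lemma h_term_Mof: "h_term q k (Mof n V) = wt q n k V"
  unfolding h_term_def Mof_def wt_def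
  by (simp add: multiset.map_comp o_def prod_unfold_prod_mset)

theorem theorem11:
  fixes n k :: nat and q :: "nat \<Rightarrow> real"
  assumes "n \<ge> 1" and "k \<ge> 1" and "\<And>j. j < k \<Longrightarrow> \<bar>q j\<bar> < 1"
  shows "(h_term q k has_sum
           ((\<Sum>s\<in>id_tuples n k. \<Prod>j<k. q j ^ comaj n (s j))
            / (\<Prod>j<k. qpoch (q j) (q j) n))) (h_index n k)"
proof -
  have m: "(wt q n k has_sum Fk q n k id) (SV n k id)"
    using main_all[OF assms(3) permutes_id] .
  have F: "Fk q n k id = (\<Sum>s\<in>id_tuples n k. \<Prod>j<k. q j ^ comaj n (s j)) / (\<Prod>j<k. qpoch (q j) (q j) n)"
    unfolding Fk_def Nk_def Tk_def id_tuples_def Pn_def ..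
  have "((\<lambda>V. h_term q k (Mof n V)) has_sum Fk q n k id) (SV n k id)"
    using m by (simp add: h_term_Mof)
  then have "(h_term q k has_sum Fk q n k id) (h_index n k)"
    using has_sum_reindex_bij_betw[OF Mof_bij] by blast
  then show ?thesis unfolding F .
qed

end
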